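(* In the setting described in the context, let $\mathbf{w}:\mathcal{K}(\mathbb{R}^n)\to\mathbb{R}$ be a bounded function satisfying $\mathbf{w}(X)-\mathbf{w}(F(X))=\xi(X)\,(1-\mathbf{w}(F(X)))$ for all $X\in\mathcal{K}(\mathbb{R}^n)$, where $\xi(X):=1-\exp(-\Psi(X))$, and such that $\lim_{k\to\infty}\mathbf{w}(\mathcal{R}(X,k))=0$ for every $X\in\mathcal{K}_{\mathcal{D}_{\mathcal{A}}}(\mathbb{R}^n)$. Then $\mathbf{w}=\mathcal{W}$ on $\mathcal{K}(\mathbb{R}^n)$.
   Context: Let $\|\cdot\|$ be a norm on $\mathbb{R}^n$ and $\mathrm{dist}(x,\Omega):=\inf_{y\in\Omega}\|x-y\|$. Let $\mathcal{K}(\mathbb{R}^n)$ denote the nonempty compact subsets of $\mathbb{R}^n$. Consider $x_{k+1}=f(x_k,u_k)$ with $f:\mathbb{R}^n\times\mathbb{R}^m\to\mathbb{R}^n$ continuous and inputs $u_k\in U$, $U\subset\mathbb{R}^m$ nonempty compact. Define $F(X):=\{f(x,u):x\in X,u\in U\}$. For $x\in\mathbb{R}^n$ and $\pi:\mathbb{Z}_+\to U$, $\varphi_x^\pi(0)=x$, $\varphi_x^\pi(k+1)=f(\varphi_x^\pi(k),\pi(k))$; $\mathcal{R}(X,k):=\{\varphi_x^\pi(k):x\in X,\pi\in U^{\mathbb{Z}_+}\}$. Let $\mathcal{A}\in\mathcal{K}(\mathbb{R}^n)$ be controlled invariant. Assume local $\ell_p$-stabilizability: there exist $r>0$, $M\ge1$,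 $p>0$, $\lambda:[0,r]\times\mathbb{Z}_+\to\mathbb{R}_+$ such that (1) for each $k$, $s\mapsto\lambda(s,k)$ is continuous, nondecreasing, $\lambda(0,k)=0$; for each $s$, $k\mapsto\lambda(s,k)$ is nonincreasing, $\lambda(s,0)\le s$; (2) $\sum_{k}\lambda(r,k)^p<\infty$; (3) for every $x$ with $\mathrm{dist}(x,\mathcal{A})\le r$ there is $\pi\in U^{\mathbb{Z}_+}$ with $\mathrm{dist}(\varphi_x^\pi(k),\mathcal{A})\le M\lambda(\mathrm{dist}(x,\mathcal{A}),k)$ for all $k$. Let $\mathcal{D}_{\mathcal{A}}:=\{x:\exists\pi\in U^{\mathbb{Z}_+},\ \lim_{k\to\infty}\mathrm{dist}(\varphi_x^\pi(k),\mathcal{A})=0\}$ and $\mathcal{K}_{\mathcal{D}_{\mathcal{A}}}(\mathbb{R}^n):=\{X\in\mathcal{K}(\mathbb{R}^n):X\cap\mathcal{D}_{\mathcal{A}}\neq\emptyset\}$. Let $\alpha:\mathbb{R}^n\to\mathbb{R}_+$ be continuous with $\underline{\alpha}\,\mathrm{dist}(x,\mathcal{A})^{\bar p}\le\alpha(x)\le\overline{\alpha}\,\mathrm{dist}(x,\mathcal{A})^{\bar p}$, constants $\underline{\alpha},\overline{\alpha}>0$, $\bar p\ge p$. Define $\Psi(X):=\inf_{y\in X}\alpha(y)$, $\mathcal{V}(X):=\sum_{k=0}^\infty\Psi(\mathcal{R}(X,k))\in[0,\infty]$, and $\mathcal{W}(X):=1-\exp(-\mathcal{V}(X))$ with the convention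 $\exp(-\infty)=0$. *)

theory Defs
  imports "HOL-Analysis.Analysis"
begin

text \<open>A general norm on the state space (the paper allows an arbitrary norm on R^n).\<close>
definition is_norm :: "(real^'n \<Rightarrow> real) \<Rightarrow> bool" where
  "is_norm N \<longleftrightarrow> (\<forall>x. N x = 0 \<longleftrightarrow> x = 0) \<and> (\<forall>x y. N (x + y) \<le> N x + N y)
     \<and> (\<forall>c x. N (c *\<^sub>R x) = \<bar>c\<bar> * N x)"

definition distN :: "(real^'n \<Rightarrow> real) \<Rightarrow> real^'n \<Rightarrow> (real^'n) set \<Rightarrow> real" where
  "distN N x \<Omega> = (INF y\<in>\<Omega>. N (x - y))"

definition Kset :: "'a::topological_space set set" where
  "Kset = {X. compact X \<and> X \<noteq> {}}"

definition Fmap :: "('a \<times> 'b \<Rightarrow> 'a) \<Rightarrow> 'b set \<Rightarrow> 'a set \<Rightarrow> 'a set" where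
  "Fmap f U X = {f (x, u) | x u. x \<in> X \<and> u \<in> U}"

primrec traj :: "('a \<times> 'b \<Rightarrow> 'a) \<Rightarrow> 'a \<Rightarrow> (nat \<Rightarrow> 'b) \<Rightarrow> nat \<Rightarrow> 'a" where
  "traj f x \<pi> 0 = x"
| "traj f x \<pi> (Suc k) = f (traj f x \<pi> k, \<pi> k)"

definition Reach :: "('a \<times> 'b \<Rightarrow> 'a) \<Rightarrow> 'b set \<Rightarrow> 'a set \<Rightarrow> nat \<Rightarrow> 'a set" where
  "Reach f U X k = {traj f x \<pi> k | x \<pi>. x \<in> X \<and> (\<forall>i. \<pi> i \<in> U)}"

definition controlled_invariant :: "('a \<times> 'b \<Rightarrow> 'a) \<Rightarrow> 'b set \<Rightarrow> 'a set \<Rightarrow> bool" where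
  "controlled_invariant f U A \<longleftrightarrow> (\<forall>x\<in>A. \<exists>u\<in>U. f (x, u) \<in> A)"

definition local_lp_stabilizable ::
  "(real^'n \<Rightarrow> real) \<Rightarrow> ((real^'n) \<times> 'b \<Rightarrow> real^'n) \<Rightarrow> 'b set \<Rightarrow> (real^'n) set
   \<Rightarrow> real \<Rightarrow> real \<Rightarrow> real \<Rightarrow> (real \<Rightarrow> nat \<Rightarrow> real) \<Rightarrow> bool" where
  "local_lp_stabilizable N f U A r M p lam \<longleftrightarrow>
     r > 0 \<and> M \<ge> 1 \<and> p > 0 \<and>
     (\<forall>s\<in>{0..r}. \<forall>k. lam s k \<ge> 0) \<and>
     (\<forall>k. continuous_on {0..r} (\<lambda>s. lam s k) \<and> mono_on {0..r} (\<lambda>s. lam s k) \<and> lam 0 k = 0) \<and>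
     (\<forall>s\<in>{0..r}. antimono (\<lambda>k. lam s k) \<and> lam s 0 \<le> s) \<and>
     summable (\<lambda>k. lam r k powr p) \<and>
     (\<forall>x. distN N x A \<le> r \<longrightarrow>
        (\<exists>\<pi>. (\<forall>i. \<pi> i \<in> U) \<and> (\<forall>k. distN N (traj f x \<pi> k) A \<le> M * lam (distN N x A) k)))"

definition DomA ::
  "(real^'n \<Rightarrow> real) \<Rightarrow> ((real^'n) \<times> 'b \<Rightarrow> real^'n) \<Rightarrow> 'b set \<Rightarrow> (real^'n) set \<Rightarrow> (real^'n) set" where
  "DomA N f U A = {x. \<exists>\<pi>. (\<forall>i. \<pi> i \<in> U) \<and> (\<lambda>k. distN N (traj f x \<pi> k) A) \<longlonglongrightarrow> 0}"

definition Psi :: "('a \<Rightarrow> real) \<Rightarrow> 'a set \<Rightarrow> real" where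
  "Psi \<alpha> X = (INF y\<in>X. \<alpha> y)"

text \<open>V takes values in [0, infinity]; W(X) = 1 - exp(-V(X)) with exp(-infinity) = 0.\<close>
definition Vfun :: "('a \<times> 'b \<Rightarrow> 'a) \<Rightarrow> 'b set \<Rightarrow> ('a \<Rightarrow> real) \<Rightarrow> 'a set \<Rightarrow> ennreal" where
  "Vfun f U \<alpha> X = (\<Sum>k. ennreal (Psi \<alpha> (Reach f U X k)))"

definition Wfun :: "('a \<times> 'b \<Rightarrow> 'a) \<Rightarrow> 'b set \<Rightarrow> ('a \<Rightarrow> real) \<Rightarrow> 'a set \<Rightarrow> real" where
  "Wfun f U \<alpha> X = (if Vfun f U \<alpha> X = \<infinity> then 1 else 1 - exp (- enn2real (Vfun f U \<alpha> X)))"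

end

theory Submission
  imports Defs
begin

lemma traj_cong: "(\<forall>i<k. \<pi> i = \<pi>' i) \<Longrightarrow> traj f x \<pi> k = traj f x \<pi>' k"
  by (induction k) auto

lemma traj_append:
  "traj f x (\<lambda>i. if i < k then \<pi>0 i else \<pi> (i - k)) (k + j) = traj f (traj f x \<pi>0 k) \<pi> j"
proof (induction j)
  case 0
  show ?case by simp (rule traj_cong, auto)
next
  case (Suc j)
  then show ?case by simp
qed

lemma Reach_0: "U \<noteq> {} \<Longrightarrow> Reach f U X 0 = X"
  unfolding Reach_def by (auto intro!: exI[of _ "\<lambda>_. SOME u. u \<in> U"] some_in_eq[THEN iffD2])

lemma Reach_Suc: "Reach f U X (Suc k) = Fmap f U (Reach f U X k)"
proof
  show "Reach f U X (Suc k) \<subseteq> Fmap f U (Reach f U X k)"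
    unfolding Reach_def Fmap_def by auto
next
  show "Fmap f U (Reach f U X k) \<subseteq> Reach f U X (Suc k)"
  proof
    fix z assume "z \<in> Fmap f U (Reach f U X k)"
    then obtain x \<pi> u where z: "z = f (traj f x \<pi> k, u)" "x \<in> X" "\<forall>i. \<pi> i \<in> U" "u \<in> U"
      unfolding Reach_def Fmap_def by blast
    have "traj f x (\<pi>(k := u)) k = traj f x \<pi> k" by (rule traj_cong) auto
    then have "z = traj f x (\<pi>(k := u)) (Suc k)" using z by simp
    moreover have "\<forall>i. (\<pi>(k := u)) i \<in> U" using z by auto
    ultimately show "z \<in> Reach f U X (Suc k)" unfolding Reach_def using z by blast
  qed
qed

lemma Fmap_Kset:
  assumes "continuous_on UNIV f" "compact U" "U \<noteq> {}" "X \<in> Kset"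
  shows "Fmap f U X \<in> Kset"
proof -
  have e: "Fmap f U X = f ` (X \<times> U)" unfolding Fmap_def by auto
  have "compact (X \<times> U)" using assms unfolding Kset_def by (auto intro: compact_Times)
  then have "compact (f ` (X \<times> U))"
    using assms(1) by (meson compact_continuous_image continuous_on_subset subset_UNIV)
  moreover have "X \<times> U \<noteq> {}" using assms unfolding Kset_def by auto
  ultimately show ?thesis unfolding e Kset_def by auto
qed

lemma Reach_Kset:
  assumes "continuous_on UNIV f" "compact U" "U \<noteq> {}" "X \<in> Kset"
  shows "Reach f U X k \<in> Kset"
proof (induction k)
  case 0
  then show ?case using assms Reach_0 by metis
next
  case (Suc k)
  then show ?case using assms Fmap_Kset Reach_Suc by metis
qed

lemma norm_nonneg':
  assumes "is_norm N" shows "N x \<ge> 0"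
proof -
  have "N (x + (-1) *\<^sub>R x) \<le> N x + N ((-1) *\<^sub>R x)" using assms unfolding is_norm_def by blast
  moreover have "N ((-1) *\<^sub>R x) = \<bar>-1\<bar> * N x" using assms unfolding is_norm_def by blast
  then have "N ((-1) *\<^sub>R x) = N x" by simp
  moreover have "N 0 = 0" using assms unfolding is_norm_def by blast
  ultimately show ?thesis by simp
qed

lemma distN_nonneg:
  assumes "is_norm N" "A \<noteq> {}" shows "distN N x A \<ge> 0"
  unfolding distN_def using assms norm_nonneg' by (intro cINF_greatest) auto

lemma Psi_nonneg:
  assumes "\<forall>x. \<alpha> x \<ge> 0" "X \<noteq> {}" shows "Psi \<alpha> X \<ge> 0"
  unfolding Psi_def using assms by (intro cINF_greatest) auto

theorem theorem14:
  fixes N :: "real^'n \<Rightarrow> real"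
    and f :: "(real^'n) \<times> (real^'m) \<Rightarrow> real^'n"
    and U :: "(real^'m) set"
    and A :: "(real^'n) set"
    and r M p :: real and lam :: "real \<Rightarrow> nat \<Rightarrow> real"
    and \<alpha> :: "real^'n \<Rightarrow> real"
    and alo ahi pbar :: real
    and w :: "(real^'n) set \<Rightarrow> real"
  assumes norm: "is_norm N"
    and f_cont: "continuous_on UNIV f"
    and U: "compact U" "U \<noteq> {}"
    and A: "compact A" "A \<noteq> {}" "controlled_invariant f U A"
    and stab: "local_lp_stabilizable N f U A r M p lam"
    and alpha_cont: "continuous_on UNIV \<alpha>"
    and alpha_nonneg: "\<forall>x. \<alpha> x \<ge> 0"
    and alpha_consts: "alo > 0" "ahi > 0" "pbar \<ge> p"
    and alpha_bounds: "\<forall>x. alo * distN N x A powr pbar \<le> \<alpha> x \<and> \<alpha> x \<le> ahi * distN N x A powr pbar"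
    and w_bounded: "\<exists>B. \<forall>X\<in>Kset. \<bar>w X\<bar> \<le> B"
    and w_eq: "\<forall>X\<in>Kset. w X - w (Fmap f U X) = (1 - exp (- Psi \<alpha> X)) * (1 - w (Fmap f U X))"
    and w_lim: "\<forall>X\<in>Kset. X \<inter> DomA N f U A \<noteq> {} \<longrightarrow> (\<lambda>k. w (Reach f U X k)) \<longlonglongrightarrow> 0"
  shows "\<forall>X\<in>Kset. w X = Wfun f U \<alpha> X"
proof
  fix X :: "(real^'n) set" assume X: "X \<in> Kset"
  define R where "R k = Reach f U X k" for k
  define a where "a k = Psi \<alpha> (R k)" for k
  define S where "S k = (\<Sum>j<k. a j)" for k
  have RK: "R k \<in> Kset" for k unfolding R_def using Reach_Kset f_cont U X by blast
  have a_nn: "a k \<ge> 0" for k unfolding a_def using Psi_nonneg[OF alpha_nonneg, of "R k"] RK[of k] unfolding Kset_def by auto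
  have step: "1 - w Y = exp (- Psi \<alpha> Y) * (1 - w (Fmap f U Y))" if "Y \<in> Kset" for Y
    using w_eq that by (auto simp: algebra_simps)
  have iter: "1 - w X = exp (- S k) * (1 - w (R k))" for k
  proof (induction k)
    case 0
    then show ?case unfolding S_def R_def using Reach_0[OF U(2), of f X] by simp
  next
    case (Suc k)
    have "1 - w (R k) = exp (- a k) * (1 - w (R (Suc k)))"
      unfolding a_def R_def Reach_Suc using step RK[of k] unfolding R_def by blast
    have "exp (- S (Suc k)) = exp (- S k) * exp (- a k)"
      unfolding S_def by (simp add: exp_add[symmetric])
    then show ?case using Suc \<open>1 - w (R k) = _\<close> by simp
  qed
  obtain B where B: "\<forall>X\<in>Kset. \<bar>w X\<bar> \<le> B" using w_bounded by blast
  have V: "Vfun f U \<alpha> X = (\<Sum>k. ennreal (a k))" unfolding Vfun_def a_def R_def by simp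
  show "w X = Wfun f U \<alpha> X"
  proof (cases "summable a")
    case False
    have Vt: "Vfun f U \<alpha> X = \<infinity>" unfolding V infinity_ennreal_def
      using summable_suminf_not_top[of a] a_nn False by blast
    have "w X = 1"
    proof (rule ccontr)
      assume ne: "w X \<noteq> 1"
      have bnd: "\<bar>1 - w X\<bar> \<le> exp (- S k) * (1 + B)" for k
      proof -
        have "\<bar>1 - w X\<bar> = exp (- S k) * \<bar>1 - w (R k)\<bar>" using iter[of k] by (simp add: abs_mult)
        also have "\<dots> \<le> exp (- S k) * (1 + B)"
          using B RK[of k] by (intro mult_left_mono) auto
        finally show ?thesis .
      qed
      have pos: "\<bar>1 - w X\<bar> > 0" using ne by simp
      have B1: "1 + B > 0"
      proof -
        have "0 < exp (- S 0) * (1 + B)" using bnd[of 0] pos by linarith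
        then show ?thesis by (simp add: zero_less_mult_iff)
      qed
      have "S k \<le> ln ((1 + B) / \<bar>1 - w X\<bar>)" for k
      proof -
        have e: "exp (- S k) = inverse (exp (S k))" by (simp add: exp_minus)
        have "\<bar>1 - w X\<bar> * exp (S k) \<le> 1 + B"
          using bnd[of k] unfolding e by (simp add: field_simps)
        then have "exp (S k) \<le> (1 + B) / \<bar>1 - w X\<bar>"
          using pos by (simp add: field_simps)
        then show ?thesis using B1 pos by (subst ln_ge_iff) auto
      qed
      then have "summable a" using a_nn unfolding S_def by (intro summableI_nonneg_bounded) auto
      then show False using False by simp
    qed
    then show ?thesis unfolding Wfun_def using Vt by simp
  next
    case True
    have Vf: "Vfun f U \<alpha> X = ennreal (suminf a)" unfolding V using suminf_ennreal2 a_nn True by blast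
    have "X \<inter> DomA N f U A \<noteq> {}"
    proof -
      from stab have r0: "r > 0" and M1: "M \<ge> 1" and p0: "p > 0"
        and lnn: "\<forall>s\<in>{0..r}. \<forall>k. lam s k \<ge> 0"
        and lmono: "\<forall>k. mono_on {0..r} (\<lambda>s. lam s k)"
        and lsum: "summable (\<lambda>k. lam r k powr p)"
        and lstab: "\<forall>x. distN N x A \<le> r \<longrightarrow>
        (\<exists>\<pi>. (\<forall>i. \<pi> i \<in> U) \<and> (\<forall>k. distN N (traj f x \<pi> k) A \<le> M * lam (distN N x A) k))"
        unfolding local_lp_stabilizable_def by auto
      define c where "c = alo * r powr pbar"
      have c0: "c > 0" unfolding c_def using r0 alpha_consts by simp
      have "a \<longlonglongrightarrow> 0" using True summable_LIMSEQ_zero by blast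
      then have "\<forall>\<^sub>F k in sequentially. a k < c" using c0 order_tendstoD(2) by blast
      then obtain k where ak: "a k < c" unfolding eventually_sequentially by blast
      have "R k \<noteq> {}" using RK[of k] unfolding Kset_def by auto
      moreover have "bdd_below (\<alpha> ` R k)" using alpha_nonneg by (intro bdd_belowI[of _ 0]) auto
      ultimately obtain y where y: "y \<in> R k" "\<alpha> y < c"
        using ak unfolding a_def Psi_def by (subst (asm) cINF_less_iff) auto
      then obtain x \<pi>0 where x: "y = traj f x \<pi>0 k" "x \<in> X" "\<forall>i. \<pi>0 i \<in> U"
        unfolding R_def Reach_def by blast
      define d where "d = distN N y A"
      have d0: "d \<ge> 0" unfolding d_def using distN_nonneg norm A(2) by blast
      have dr: "d \<le> r"
      proof (rule ccontr)
        assume "\<not> d \<le> r"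
        then have "r powr pbar \<le> d powr pbar" using r0 alpha_consts p0 by (intro powr_mono2) auto
        then have "alo * r powr pbar \<le> alo * d powr pbar" using alpha_consts by simp
        also have "\<dots> \<le> \<alpha> y" unfolding d_def using alpha_bounds by blast
        finally have "c \<le> \<alpha> y" unfolding c_def .
        then show False using y by simp
      qed
      obtain \<pi> where pi: "\<forall>i. \<pi> i \<in> U" "\<forall>j. distN N (traj f y \<pi> j) A \<le> M * lam d j"
        using lstab dr unfolding d_def by blast
      have ldr: "lam d j \<le> lam r j" for j
        using mono_onD[OF lmono[rule_format, of j], of d r] d0 dr r0 by simp
      have lr0: "lam r j \<ge> 0" for j using lnn r0 by auto
      have "(\<lambda>j. (lam r j powr p) powr (1/p)) \<longlonglongrightarrow> 0"
      proof (rule tendsto_zero_powrI[where b="1/p"])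
        show "(\<lambda>j. lam r j powr p) \<longlonglongrightarrow> 0" using lsum by (rule summable_LIMSEQ_zero)
      qed (use p0 in auto)
      moreover have "(lam r j powr p) powr (1/p) = lam r j" for j
        using p0 lr0[of j] by (simp add: powr_powr powr_one)
      ultimately have ltend: "(\<lambda>j. lam r j) \<longlonglongrightarrow> 0" by simp
      define \<pi>' where "\<pi>' = (\<lambda>i. if i < k then \<pi>0 i else \<pi> (i - k))"
      have pi'U: "\<forall>i. \<pi>' i \<in> U" unfolding \<pi>'_def using x pi by auto
      have "(\<lambda>j. distN N (traj f x \<pi>' (j + k)) A) \<longlonglongrightarrow> 0"
      proof (rule Lim_null_comparison)
        show "\<forall>\<^sub>F j in sequentially. norm (distN N (traj f x \<pi>' (j + k)) A) \<le> M * lam r j"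
        proof (intro always_eventually allI)
          fix j
          have e: "traj f x \<pi>' (j + k) = traj f y \<pi> j"
            unfolding \<pi>'_def x(1) using traj_append[of f x k \<pi>0 \<pi> j] by (simp add: add.commute)
          have "distN N (traj f y \<pi> j) A \<ge> 0" using distN_nonneg norm A(2) by blast
          moreover have "M * lam d j \<le> M * lam r j" using ldr M1 by (intro mult_left_mono) auto
          ultimately show "norm (distN N (traj f x \<pi>' (j + k)) A) \<le> M * lam r j"
            using e pi(2)[rule_format, of j] by auto
        qed
        show "(\<lambda>j. M * lam r j) \<longlonglongrightarrow> 0" using ltend tendsto_mult_right_zero by blast
      qed
      then have "(\<lambda>j. distN N (traj f x \<pi>' j) A) \<longlonglongrightarrow> 0" by (rule LIMSEQ_offset)
      then have "x \<in> DomA N f U A" unfolding DomA_def using pi'U by blast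
      then show ?thesis using x by blast
    qed
    then have wl: "(\<lambda>k. w (R k)) \<longlonglongrightarrow> 0" using w_lim X unfolding R_def by blast
    have "S \<longlonglongrightarrow> suminf a" unfolding S_def using True summable_LIMSEQ by blast
    then have "(\<lambda>k. exp (- S k) * (1 - w (R k))) \<longlonglongrightarrow> exp (- suminf a) * (1 - 0)"
      by (intro tendsto_intros wl)
    moreover have "(\<lambda>k. exp (- S k) * (1 - w (R k))) = (\<lambda>k. 1 - w X)" using iter by simp
    ultimately have "(\<lambda>k. 1 - w X) \<longlonglongrightarrow> exp (- suminf a)" by simp
    then have "1 - w X = exp (- suminf a)" using LIMSEQ_unique tendsto_const by blast
    then show ?thesis unfolding Wfun_def Vf using suminf_nonneg[OF True a_nn] by simp
  qed
qed

end
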